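(* For all $n\in\mathbb{N}\cup\{0\}$ and $x\in\mathbb{R}$, the physicist's Hermite polynomials satisfy $$|H_n(x)|\le\begin{cases}n^{n/2}(4\sqrt2)^n\left(1+\frac n2\right),&\text{if }|x|\le\sqrt{2n},\\ 2^{2n}|x|^n\left(1+\frac n2\right),&\text{if }|x|>\sqrt{2n},\end{cases}$$ where $0^0:=1$. In particular, $$|H_n(x)|\le4^n\left(1+\frac n2\right)\left(2^{n/2}n^{n/2}+|x|^n\right).$$
   Context: $H_n$ denotes the $n$-th physicist's Hermite polynomial, $H_n(x)=\sum_{m=0}^{\lfloor n/2\rfloor}\frac{(-1)^m n!}{m!(n-2m)!}(2x)^{n-2m}$. *)

theory Defs
  imports Complex_Main
begin

definition hermite :: "nat \<Rightarrow> real \<Rightarrow> real" where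
  "hermite n x = (\<Sum>m\<le>n div 2. (-1) ^ m * fact n / (fact m * fact (n - 2 * m)) * (2 * x) ^ (n - 2 * m))"

end

theory Submission
  imports Defs
begin

lemma fact_bound_nat:
  fixes n m :: nat
  assumes "2 * m \<le> n"
  shows "fact n \<le> 2 ^ n * n ^ m * (fact m * fact (n - 2 * m) :: nat)"
proof -
  have a: "fact (2*m) * fact (n - 2*m) * (n choose (2*m)) = (fact n :: nat)"
    using binomial_fact_lemma[OF assms] .
  have b: "fact m * fact (2*m - m) * ((2*m) choose m) = (fact (2*m) :: nat)"
    using binomial_fact_lemma[of m "2*m"] by simp
  have c: "((2*m) choose m) * fact m \<le> (2*m)^m" by (rule binomial_fact_pow)
  have d: "(2*m)^m \<le> n^m" using assms by (intro power_mono) auto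
  have e: "(fact (2*m) :: nat) \<le> fact m * n^m"
  proof -
    have "(fact (2*m)::nat) = fact m * (((2*m) choose m) * fact m)" using b
      by (simp add: mult.commute mult.left_commute)
    also have "\<dots> \<le> fact m * n^m" using c d by simp
    finally show ?thesis .
  qed
  have "(fact n::nat) = fact (2*m) * fact (n - 2*m) * (n choose (2*m))" using a by simp
  also have "\<dots> \<le> (fact m * n^m) * fact (n - 2*m) * 2^n"
    using e binomial_le_pow2[of n "2*m"] by (intro mult_mono) auto
  finally show ?thesis by (simp add: mult_ac)
qed

lemma term_bound:
  fixes n m :: nat and x :: real
  assumes "2 * m \<le> n"
  shows "\<bar>(-1) ^ m * fact n / (fact m * fact (n - 2 * m)) * (2 * x) ^ (n - 2 * m)\<bar>
         \<le> 2 ^ n * real n ^ m * (2 * \<bar>x\<bar>) ^ (n - 2 * m)"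
proof -
  have f: "real (fact n) \<le> real (2 ^ n * n ^ m * (fact m * fact (n - 2 * m)))"
    using fact_bound_nat[OF assms] by (simp only: of_nat_le_iff)
  have "(fact n :: real) \<le> 2 ^ n * real n ^ m * (fact m * fact (n - 2 * m))"
    using f by (simp only: of_nat_fact of_nat_mult of_nat_power of_nat_numeral)
  then have g: "fact n / (fact m * fact (n - 2 * m)) \<le> (2 ^ n * real n ^ m :: real)"
    by (simp add: divide_le_eq)
  have "\<bar>(-1) ^ m * fact n / (fact m * fact (n - 2 * m)) * (2 * x) ^ (n - 2 * m)\<bar>
     = fact n / (fact m * fact (n - 2 * m)) * (2 * \<bar>x\<bar>) ^ (n - 2 * m)"
    by (simp add: abs_mult power_abs)
  also have "\<dots> \<le> 2 ^ n * real n ^ m * (2 * \<bar>x\<bar>) ^ (n - 2 * m)"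
    using g by (intro mult_right_mono) auto
  finally show ?thesis .
qed

lemma sum_bound:
  fixes n :: nat and x B :: real
  assumes "\<And>m. 2 * m \<le> n \<Longrightarrow> 2 ^ n * real n ^ m * (2 * \<bar>x\<bar>) ^ (n - 2 * m) \<le> B"
  shows "\<bar>hermite n x\<bar> \<le> B * (1 + real n / 2)"
proof -
  have B0: "0 \<le> B" using assms[of 0] order_trans[of 0 "2 ^ n * real n ^ 0 * (2 * \<bar>x\<bar>) ^ (n - 2 * 0)" B] by simp
  have "\<bar>hermite n x\<bar> \<le> (\<Sum>m\<le>n div 2. \<bar>(-1) ^ m * fact n / (fact m * fact (n - 2 * m)) * (2 * x) ^ (n - 2 * m)\<bar>)"
    unfolding hermite_def by (rule sum_abs)
  also have "\<dots> \<le> (\<Sum>m\<le>n div 2. B)"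
  proof (rule sum_mono)
    fix m assume "m \<in> {..n div 2}"
    then have "2 * m \<le> n" by auto
    then show "\<bar>(-1) ^ m * fact n / (fact m * fact (n - 2 * m)) * (2 * x) ^ (n - 2 * m)\<bar> \<le> B"
      using term_bound assms order_trans by blast
  qed
  also have "\<dots> = B * real (n div 2 + 1)" by simp
  also have "\<dots> \<le> B * (1 + real n / 2)"
  proof -
    have "real (n div 2) \<le> real n / 2" by linarith
    then show ?thesis using B0 by (intro mult_left_mono) auto
  qed
  finally show ?thesis .
qed

lemma four_pow: "(4::real) ^ n = 2 ^ n * 2 ^ n" "(2::real) ^ (2 * n) = 4 ^ n"
proof -
  have "(4::real) ^ n = (2 * 2) ^ n" by simp
  also have "\<dots> = 2 ^ n * 2 ^ n" by (rule power_mult_distrib)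
  finally show "(4::real) ^ n = 2 ^ n * 2 ^ n" .
  have "(2::real) ^ (2 * n) = (2 ^ 2) ^ n" by (rule power_mult)
  also have "\<dots> = 4 ^ n" by simp
  finally show "(2::real) ^ (2 * n) = 4 ^ n" .
qed

lemma case1:
  fixes n m :: nat and x :: real
  assumes "2 * m \<le> n" "\<bar>x\<bar> \<le> sqrt (2 * real n)"
  shows "2 ^ n * real n ^ m * (2 * \<bar>x\<bar>) ^ (n - 2 * m) \<le> sqrt (real n) ^ n * (4 * sqrt 2) ^ n"
proof -
  define k where "k = n - 2 * m"
  have nk: "n = 2 * m + k" using assms(1) k_def by simp
  have s2n: "sqrt (2 * real n) = sqrt 2 * sqrt (real n)" by (simp add: real_sqrt_mult)
  have "(2 * \<bar>x\<bar>) ^ k \<le> (2 * (sqrt 2 * sqrt (real n))) ^ k"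
    using assms(2) s2n by (intro power_mono) auto
  moreover have eq: "real n ^ m = sqrt (real n) ^ (2 * m)"
    by (simp add: power_mult)
  ultimately have "2 ^ n * real n ^ m * (2 * \<bar>x\<bar>) ^ k \<le> 2 ^ n * sqrt (real n) ^ (2 * m) * (2 * (sqrt 2 * sqrt (real n))) ^ k"
    unfolding eq[symmetric] by (intro mult_left_mono) auto
  also have "\<dots> = sqrt (real n) ^ n * (2 ^ n * (2 * sqrt 2) ^ k)"
    unfolding nk by (simp add: power_mult_distrib power_add mult_ac)
  also have "\<dots> \<le> sqrt (real n) ^ n * (2 ^ n * (2 * sqrt 2) ^ n)"
  proof -
    have "1 \<le> 2 * sqrt (2::real)" proof -
      have "1 \<le> sqrt (2::real)" by simp
      then show ?thesis by linarith
    qed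
    then have "(2 * sqrt 2) ^ k \<le> (2 * sqrt (2::real)) ^ n"
      by (intro power_increasing) (auto simp: nk)
    then show ?thesis by (intro mult_left_mono) auto
  qed
  also have "\<dots> = sqrt (real n) ^ n * (4 * sqrt 2) ^ n"
    by (simp add: power_mult_distrib four_pow(1))
  finally show ?thesis unfolding k_def .
qed

lemma case2:
  fixes n m :: nat and x :: real
  assumes "2 * m \<le> n" "\<not> \<bar>x\<bar> \<le> sqrt (2 * real n)"
  shows "2 ^ n * real n ^ m * (2 * \<bar>x\<bar>) ^ (n - 2 * m) \<le> 2 ^ (2 * n) * \<bar>x\<bar> ^ n"
proof -
  define k where "k = n - 2 * m"
  have nk: "n = 2 * m + k" using assms(1) k_def by simp
  have "sqrt (2 * real n) < \<bar>x\<bar>" using assms(2) by simp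
  then have "2 * real n < \<bar>x\<bar> ^ 2"
  proof -
    have "sqrt (2 * real n) ^ 2 < \<bar>x\<bar> ^ 2"
      using \<open>sqrt (2 * real n) < \<bar>x\<bar>\<close> by (intro power_strict_mono) auto
    then show ?thesis by simp
  qed
  then have xn: "real n \<le> \<bar>x\<bar> ^ 2" by simp
  have "real n ^ m \<le> (\<bar>x\<bar> ^ 2) ^ m" using xn by (intro power_mono) auto
  then have "2 ^ n * real n ^ m * (2 * \<bar>x\<bar>) ^ k \<le> 2 ^ n * (\<bar>x\<bar> ^ 2) ^ m * (2 * \<bar>x\<bar>) ^ k"
    by (intro mult_right_mono mult_left_mono) auto
  also have "\<dots> = 2 ^ n * 2 ^ k * \<bar>x\<bar> ^ n"
  proof -
    have e1: "\<bar>x\<bar> ^ (m * 2) = x ^ (m * 2)" by (rule power_even_abs) simp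
    have e2: "\<bar>x\<bar> ^ (2 * m) = x ^ (2 * m)" by (rule power_even_abs) simp
    show ?thesis
      unfolding nk by (simp add: power_mult_distrib power_add power_mult[symmetric] mult_ac e1 e2)
  qed
  also have "\<dots> \<le> 2 ^ n * 2 ^ n * \<bar>x\<bar> ^ n"
    by (intro mult_right_mono mult_left_mono power_increasing) (auto simp: nk)
  also have "\<dots> = 2 ^ (2 * n) * \<bar>x\<bar> ^ n" by (simp add: power_add mult_2)
  finally show ?thesis unfolding k_def .
qed

theorem lemma4p3:
  fixes n :: nat and x :: real
  shows "\<bar>hermite n x\<bar> \<le>
           (if \<bar>x\<bar> \<le> sqrt (2 * real n)
            then sqrt (real n) ^ n * (4 * sqrt 2) ^ n * (1 + real n / 2)
            else 2 ^ (2 * n) * \<bar>x\<bar> ^ n * (1 + real n / 2))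
       \<and> \<bar>hermite n x\<bar> \<le> 4 ^ n * (1 + real n / 2) * (sqrt 2 ^ n * sqrt (real n) ^ n + \<bar>x\<bar> ^ n)"
proof (cases "\<bar>x\<bar> \<le> sqrt (2 * real n)")
  case True
  have h: "\<bar>hermite n x\<bar> \<le> sqrt (real n) ^ n * (4 * sqrt 2) ^ n * (1 + real n / 2)"
    by (rule sum_bound) (rule case1[OF _ True])
  have "sqrt (real n) ^ n * (4 * sqrt 2) ^ n * (1 + real n / 2)
      = 4 ^ n * (1 + real n / 2) * (sqrt 2 ^ n * sqrt (real n) ^ n)"
    by (simp add: power_mult_distrib mult_ac)
  also have "\<dots> \<le> 4 ^ n * (1 + real n / 2) * (sqrt 2 ^ n * sqrt (real n) ^ n + \<bar>x\<bar> ^ n)"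
    by (intro mult_left_mono) auto
  finally have h2: "\<bar>hermite n x\<bar> \<le> 4 ^ n * (1 + real n / 2) * (sqrt 2 ^ n * sqrt (real n) ^ n + \<bar>x\<bar> ^ n)"
    using h by (rule order_trans[rotated])
  have h3: "\<bar>hermite n x\<bar> \<le>
           (if \<bar>x\<bar> \<le> sqrt (2 * real n)
            then sqrt (real n) ^ n * (4 * sqrt 2) ^ n * (1 + real n / 2)
            else 2 ^ (2 * n) * \<bar>x\<bar> ^ n * (1 + real n / 2))" using h True by simp
  show ?thesis using h2 h3 by blast
next
  case False
  have h: "\<bar>hermite n x\<bar> \<le> 2 ^ (2 * n) * \<bar>x\<bar> ^ n * (1 + real n / 2)"
    by (rule sum_bound) (rule case2[OF _ False])
  have "2 ^ (2 * n) * \<bar>x\<bar> ^ n * (1 + real n / 2) = 4 ^ n * (1 + real n / 2) * \<bar>x\<bar> ^ n"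
    unfolding four_pow(2) by (simp only: mult_ac)
  also have "\<dots> \<le> 4 ^ n * (1 + real n / 2) * (sqrt 2 ^ n * sqrt (real n) ^ n + \<bar>x\<bar> ^ n)"
    by (intro mult_left_mono) auto
  finally have h2: "\<bar>hermite n x\<bar> \<le> 4 ^ n * (1 + real n / 2) * (sqrt 2 ^ n * sqrt (real n) ^ n + \<bar>x\<bar> ^ n)"
    using h by (rule order_trans[rotated])
  have h3: "\<bar>hermite n x\<bar> \<le>
           (if \<bar>x\<bar> \<le> sqrt (2 * real n)
            then sqrt (real n) ^ n * (4 * sqrt 2) ^ n * (1 + real n / 2)
            else 2 ^ (2 * n) * \<bar>x\<bar> ^ n * (1 + real n / 2))" using h False by simp
  show ?thesis using h2 h3 by blast
qed

end
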